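(* Let $q$ be a prime power, $N_0=(\Gamma_q)^n$ and $t$ a positive integer. Let $x_1,\dots,x_L\in\mathbb{F}_q^n$ be pairwise distinct, let $y_1,\dots,y_L\in\mathbb{F}_q^n$ be pairwise distinct, and let $\alpha,\beta\in\mathbb{F}_q\setminus\{0\}$. If $L\ge4tN_0$, then there exists $i\in[L]$ such that $\big|\{(i',i'')\in([L]\setminus\{i\})^2:\alpha x_{i'}+\beta y_{i''}=\alpha x_i+\beta y_i\}\big|\ge t$.
   Context: $\Gamma_q:=q\,J(q)$ where $J(t)=\frac1t\min_{0<x<1}\frac{1+x+\cdots+x^{t-1}}{x^{(t-1)/3}}$. *)

theory Defs
  imports Complex_Main
begin

text \<open>J(t) = (1/t) * min over 0<x<1 of (1 + x + ... + x^(t-1)) / x^((t-1)/3).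
  The minimum is rendered as an infimum (which coincides with the minimum when attained).\<close>
definition J_fun :: "nat \<Rightarrow> real" where
  "J_fun t = (1 / real t) *
     Inf {(\<Sum>j<t. x ^ j) / x powr ((real t - 1) / 3) | x::real. 0 < x \<and> x < 1}"

definition Gamma_q :: "nat \<Rightarrow> real" where
  "Gamma_q q = real q * J_fun q"

text \<open>F_q^n, represented as functions nat => F_q vanishing at coordinates >= n.\<close>
definition Fqn :: "nat \<Rightarrow> (nat \<Rightarrow> 'a::zero) set" where
  "Fqn n = {v. \<forall>k\<ge>n. v k = 0}"

end

theory Submission
  imports Defs "HOL-Library.FuncSet"
begin

lemma card_fiber_bound:
  assumes "finite A" "finite B" "\<Phi> ` A \<subseteq> B" "\<And>z. z \<in> B \<Longrightarrow> card {a\<in>A. \<Phi> a = z} \<le> m"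
  shows "card A \<le> card B * m"
proof -
  have sub: "A \<subseteq> (\<Union>z\<in>B. {a\<in>A. \<Phi> a = z})" using assms(3) by blast
  have "card A \<le> card (\<Union>z\<in>B. {a\<in>A. \<Phi> a = z})"
    by (rule card_mono[OF _ sub]) (use assms(1,2) in auto)
  also have "\<dots> \<le> (\<Sum>z\<in>B. card {a\<in>A. \<Phi> a = z})"
    by (rule card_UN_le[OF assms(2)])
  also have "\<dots> \<le> (\<Sum>z\<in>B. m)" by (intro sum_mono assms(4))
  finally show ?thesis by simp
qed

lemma nonzero_pow_card:
  fixes x :: "'a::{finite,field}"
  assumes "x \<noteq> 0"
  shows "x ^ (card (UNIV::'a set) - 1) = 1"
proof -
  let ?U = "UNIV - {0::'a}"
  have inj: "inj_on ((*) x) ?U" using assms by (auto simp: inj_on_def)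
  have img: "(*) x ` ?U = ?U"
  proof
    show "(*) x ` ?U \<subseteq> ?U" using assms by auto
    show "?U \<subseteq> (*) x ` ?U"
    proof
      fix y assume "y \<in> ?U"
      then have "y = x * (y / x)" "y / x \<in> ?U" using assms by auto
      then show "y \<in> (*) x ` ?U" by blast
    qed
  qed
  have "prod id ?U = prod id ((*) x ` ?U)" by (subst img) (rule refl)
  also have "\<dots> = prod ((*) x) ?U" using prod.reindex[OF inj, of id] by (simp add: comp_def)
  also have "\<dots> = x ^ card ?U * prod id ?U" by (simp add: prod.distrib)
  finally have "x ^ card ?U * prod id ?U = 1 * prod id ?U" by simp
  moreover have "prod id ?U \<noteq> 0" by (simp add: prod_zero_iff)
  ultimately have "x ^ card ?U = 1" by (metis mult_right_cancel)
  moreover have "card ?U = card (UNIV::'a set) - 1" by (rule card_Diff_singleton) simp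
  ultimately show ?thesis by metis
qed

lemma card_field_ge2: "card (UNIV :: 'a::{finite,field} set) \<ge> 2"
proof -
  have "card {0::'a,1} = 2" by simp
  moreover have "card {0::'a,1} \<le> card (UNIV::'a set)" by (rule card_mono) auto
  ultimately show ?thesis by simp
qed



lemma card_funspace: "finite I \<Longrightarrow> card (PiE I (\<lambda>_. UNIV::'a::finite set)) = card (UNIV::'a set) ^ card I"
  by (simp add: card_PiE)

lemma fin_funspace[simp]: "finite I \<Longrightarrow> finite (PiE I (\<lambda>_. UNIV::'a::finite set))"
  by (rule finite_PiE) auto

lemma fin_funspace_sub[simp]: "finite I \<Longrightarrow> finite {u \<in> PiE I (\<lambda>_. UNIV::'a::finite set). P u}"
  by (rule finite_subset[OF _ fin_funspace]) auto

lemma kernel_card: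
  fixes f :: "'e \<Rightarrow> 'i \<Rightarrow> 'a::{finite,field}"
  assumes I: "finite I" and E: "finite E"
  shows "card (UNIV::'a set) ^ card I \<le>
     card {u \<in> PiE I (\<lambda>_. UNIV). \<forall>e\<in>E. (\<Sum>i\<in>I. u i * f e i) = 0} * card (UNIV::'a set) ^ card E"
proof -
  define K where "K = {u \<in> PiE I (\<lambda>_. UNIV::'a set). \<forall>e\<in>E. (\<Sum>i\<in>I. u i * f e i) = 0}"
  define \<Phi> where "\<Phi> u = restrict (\<lambda>e. \<Sum>i\<in>I. u i * f e i) E" for u :: "'i \<Rightarrow> 'a"
  have finK: "finite K" unfolding K_def using I by simp
  have "card (PiE I (\<lambda>_. UNIV::'a set)) \<le> card (PiE E (\<lambda>_. UNIV::'a set)) * card K"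
  proof (rule card_fiber_bound[where \<Phi>=\<Phi>])
    show "finite (PiE I (\<lambda>_. UNIV::'a set))" using I by simp
    show "finite (PiE E (\<lambda>_. UNIV::'a set))" using E by simp
    show "\<Phi> ` (PiE I (\<lambda>_. UNIV)) \<subseteq> PiE E (\<lambda>_. UNIV)" unfolding \<Phi>_def by auto
    fix z
    show "card {a \<in> PiE I (\<lambda>_. UNIV). \<Phi> a = z} \<le> card K"
    proof (cases "{a \<in> PiE I (\<lambda>_. UNIV). \<Phi> a = z} = {}")
      case True show ?thesis by (subst True) simp
    next
      case False
      then obtain u0 where u0: "u0 \<in> PiE I (\<lambda>_. UNIV)" "\<Phi> u0 = z" by blast
      define g where "g u = restrict (\<lambda>i. u i - u0 i) I" for u :: "'i \<Rightarrow> 'a"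
      have inj: "inj_on g {a \<in> PiE I (\<lambda>_. UNIV). \<Phi> a = z}"
      proof (rule inj_onI)
        fix a b assume a: "a \<in> {a \<in> PiE I (\<lambda>_. UNIV). \<Phi> a = z}" and b: "b \<in> {a \<in> PiE I (\<lambda>_. UNIV). \<Phi> a = z}"
          and "g a = g b"
        have "\<forall>i\<in>I. a i = b i"
        proof
          fix i assume i: "i \<in> I"
          from \<open>g a = g b\<close> have "g a i = g b i" by simp
          with i show "a i = b i" by (simp add: g_def)
        qed
        then show "a = b" using a b by (auto intro: PiE_ext)
      qed
      moreover have img: "g ` {a \<in> PiE I (\<lambda>_. UNIV). \<Phi> a = z} \<subseteq> K"
      proof
        fix w assume "w \<in> g ` {a \<in> PiE I (\<lambda>_. UNIV). \<Phi> a = z}"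
        then obtain a where a: "a \<in> PiE I (\<lambda>_. UNIV)" "\<Phi> a = z" and w: "w = g a" by blast
        have "\<forall>e\<in>E. (\<Sum>i\<in>I. w i * f e i) = 0"
        proof
          fix e assume e: "e \<in> E"
          have "(\<Sum>i\<in>I. a i * f e i) = (\<Sum>i\<in>I. u0 i * f e i)"
          proof -
            have "\<Phi> a e = \<Phi> u0 e" using a(2) u0(2) by simp
            then show ?thesis using e unfolding \<Phi>_def by simp
          qed
          moreover have "(\<Sum>i\<in>I. w i * f e i) = (\<Sum>i\<in>I. a i * f e i) - (\<Sum>i\<in>I. u0 i * f e i)"
            unfolding w g_def by (simp add: sum_subtractf[symmetric] algebra_simps)
          ultimately show "(\<Sum>i\<in>I. w i * f e i) = 0" by simp
        qed
        then show "w \<in> K" unfolding K_def w g_def by auto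
      qed
      show ?thesis using card_inj_on_le[OF inj img finK] .
    qed
  qed
  then show ?thesis using I E unfolding K_def by (simp add: card_PiE mult.commute)
qed

lemma support_exists:
  fixes K :: "('i \<Rightarrow> 'a::{finite,field}) set"
  assumes I: "finite I" and KI: "K \<subseteq> PiE I (\<lambda>_. UNIV)" and Kne: "K \<noteq> {}"
    and cl: "\<And>u v c. u \<in> K \<Longrightarrow> v \<in> K \<Longrightarrow> restrict (\<lambda>i. u i + c * v i) I \<in> K"
  shows "\<exists>u\<in>K. card K \<le> card (UNIV::'a set) ^ card {i\<in>I. u i \<noteq> 0}"
proof -
  define P where "P S \<longleftrightarrow> S \<subseteq> I \<and> (\<forall>v::'i\<Rightarrow>'a. \<exists>k\<in>K. \<forall>i\<in>S. k i = v i)" for S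
  define Ss where "Ss = {S. P S}"
  have "Ss \<subseteq> Pow I" unfolding Ss_def P_def by auto
  then have finSs: "finite Ss" using I finite_subset by blast
  have "{} \<in> Ss" unfolding Ss_def P_def using Kne by auto
  then have ne: "card ` Ss \<noteq> {}" by blast
  obtain S where S: "S \<in> Ss" "card S = Max (card ` Ss)"
    using Max_in[OF finite_imageI[OF finSs] ne] by auto
  have max: "card S' \<le> card S" if "P S'" for S'
    using that S(2) finSs unfolding Ss_def by (simp add: Ss_def)
  have PS: "P S" using S(1) unfolding Ss_def by simp
  then have SI: "S \<subseteq> I" unfolding P_def by simp
  have finS: "finite S" using SI I finite_subset by blast
  have inj: "inj_on (\<lambda>k. restrict k S) K"
  proof (rule inj_onI)
    fix k1 k2 assume k1: "k1 \<in> K" and k2: "k2 \<in> K" and eq: "restrict k1 S = restrict k2 S"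
    define k where "k = restrict (\<lambda>i. k1 i + (-1) * k2 i) I"
    have kK: "k \<in> K" unfolding k_def using cl k1 k2 .
    have k0S: "\<forall>i\<in>S. k i = 0"
    proof
      fix i assume i: "i \<in> S"
      from eq have "restrict k1 S i = restrict k2 S i" by simp
      with i SI show "k i = 0" unfolding k_def by auto
    qed
    have "\<forall>i\<in>I. k i = 0"
    proof (rule ccontr)
      assume "\<not> (\<forall>i\<in>I. k i = 0)"
      then obtain i where i: "i \<in> I" "k i \<noteq> 0" by blast
      then have iS: "i \<notin> S" using k0S by blast
      have "P (insert i S)"
        unfolding P_def
      proof (intro conjI allI)
        show "insert i S \<subseteq> I" using i SI by auto
        fix v :: "'i \<Rightarrow> 'a"
        obtain k' where k': "k' \<in> K" "\<forall>j\<in>S. k' j = v j" using PS unfolding P_def by blast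
        define c where "c = (v i - k' i) / k i"
        define kk where "kk = restrict (\<lambda>j. k' j + c * k j) I"
        have "kk \<in> K" unfolding kk_def using cl k'(1) kK .
        moreover have "\<forall>j\<in>insert i S. kk j = v j"
        proof
          fix j assume j: "j \<in> insert i S"
          show "kk j = v j"
          proof (cases "j = i")
            case True then show ?thesis unfolding kk_def c_def using i by simp
          next
            case False then have "j \<in> S" using j by simp
            then show ?thesis unfolding kk_def using k' k0S SI by auto
          qed
        qed
        ultimately show "\<exists>k\<in>K. \<forall>j\<in>insert i S. k j = v j" by blast
      qed
      then have "card (insert i S) \<le> card S" by (rule max)
      then show False using iS finS by simp
    qed
    then have "\<forall>i\<in>I. k1 i = k2 i" unfolding k_def by simp
    moreover have "k1 \<in> PiE I (\<lambda>_. UNIV)" "k2 \<in> PiE I (\<lambda>_. UNIV)" using k1 k2 KI by auto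
    ultimately show "k1 = k2" by (auto intro: PiE_ext)
  qed
  have img: "(\<lambda>k. restrict k S) ` K \<subseteq> PiE S (\<lambda>_. UNIV)" by auto
  have "card K \<le> card (PiE S (\<lambda>_. UNIV::'a set))"
    using card_inj_on_le[OF inj img] finS by simp
  then have cK: "card K \<le> card (UNIV::'a set) ^ card S" using finS by (simp add: card_PiE)
  from PS have "\<forall>v::'i\<Rightarrow>'a. \<exists>k\<in>K. \<forall>i\<in>S. k i = v i" unfolding P_def by blast
  then have "\<exists>k\<in>K. \<forall>i\<in>S. k i = (\<lambda>_. 1::'a) i" by (rule spec)
  then obtain u where u: "u \<in> K" "\<forall>i\<in>S. u i = (\<lambda>_. 1::'a) i" by blast
  have "S \<subseteq> {i\<in>I. u i \<noteq> 0}" using u SI by auto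
  then have "card S \<le> card {i\<in>I. u i \<noteq> 0}" using I by (intro card_mono) auto
  then have "card (UNIV::'a set) ^ card S \<le> card (UNIV::'a set) ^ card {i\<in>I. u i \<noteq> 0}"
    by (intro power_increasing) (auto simp: card_gt_0_iff Suc_le_eq)
  then show ?thesis using cK u(1) order_trans by blast
qed

lemma contract_identity:
  fixes w h :: "'i \<Rightarrow> 'a::{finite,field}" and f g :: "'e \<Rightarrow> 'i \<Rightarrow> 'a" and f' g' :: "'e2 \<Rightarrow> 'i \<Rightarrow> 'a"
  assumes I: "finite I" and k: "k \<in> I"
    and eq: "\<forall>j\<in>I. (if j = k then h j else 0) = (\<Sum>e\<in>E2. f e j * g e k) + (\<Sum>e\<in>E3. f' e k * g' e j)"
  shows "w k * h k = (\<Sum>e\<in>E2. g e k * (\<Sum>j\<in>I. w j * f e j)) + (\<Sum>e\<in>E3. f' e k * (\<Sum>j\<in>I. w j * g' e j))"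
proof -
  have "w k * h k = (\<Sum>j\<in>I. w j * (if j = k then h j else 0))"
    using I k by (simp add: if_distrib[of "\<lambda>x. w _ * x"] sum.delta' cong: if_cong)
  also have "\<dots> = (\<Sum>j\<in>I. w j * ((\<Sum>e\<in>E2. f e j * g e k) + (\<Sum>e\<in>E3. f' e k * g' e j)))"
    using eq by (intro sum.cong) auto
  also have "\<dots> = (\<Sum>j\<in>I. \<Sum>e\<in>E2. g e k * (w j * f e j)) + (\<Sum>j\<in>I. \<Sum>e\<in>E3. f' e k * (w j * g' e j))"
    by (simp add: distrib_left sum_distrib_left sum.distrib algebra_simps)
  also have "\<dots> = (\<Sum>e\<in>E2. g e k * (\<Sum>j\<in>I. w j * f e j)) + (\<Sum>e\<in>E3. f' e k * (\<Sum>j\<in>I. w j * g' e j))"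
    by (simp add: sum_distrib_left sum.swap[of _ I])
  finally show ?thesis .
qed

lemma diag2_rank:
  fixes h :: "'i \<Rightarrow> 'a::{finite,field}" and f g :: "'e \<Rightarrow> 'i \<Rightarrow> 'a" and f' g' :: "'e2 \<Rightarrow> 'i \<Rightarrow> 'a"
  assumes I: "finite I" and E2: "finite E2" and E3: "finite E3"
    and eq: "\<forall>j\<in>I. \<forall>k\<in>I. (if j = k then h j else 0) = (\<Sum>e\<in>E2. f e j * g e k) + (\<Sum>e\<in>E3. f' e k * g' e j)"
  shows "card {j\<in>I. h j \<noteq> 0} \<le> card E2 + card E3"
proof -
  let ?q = "card (UNIV::'a set)"
  let ?S = "{j\<in>I. h j \<noteq> 0}"
  define K2 where "K2 = {w \<in> PiE I (\<lambda>_. UNIV::'a set). \<forall>e\<in>E2. (\<Sum>j\<in>I. w j * f e j) = 0}"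
  have c1: "?q ^ card I \<le> card K2 * ?q ^ card E2" unfolding K2_def by (rule kernel_card[OF I E2])
  define Span where "Span = (\<lambda>c. restrict (\<lambda>k. \<Sum>e\<in>E3. f' e k * c e) I) ` PiE E3 (\<lambda>_. UNIV::'a set)"
  have cSpan: "card Span \<le> ?q ^ card E3"
  proof -
    have "card Span \<le> card (PiE E3 (\<lambda>_. UNIV::'a set))"
      unfolding Span_def using E3 by (intro card_image_le) simp
    then show ?thesis using E3 by (simp add: card_PiE)
  qed
  define \<Psi> where "\<Psi> w = restrict (\<lambda>k. w k * h k) I" for w :: "'i \<Rightarrow> 'a"
  have finK2: "finite K2" unfolding K2_def using I by (auto intro: finite_PiE)
  have finS: "finite ?S" using I by simp
  have "card K2 \<le> card Span * ?q ^ card (I - ?S)"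
  proof (rule card_fiber_bound[where \<Phi>=\<Psi>])
    show "finite K2" by fact
    show "finite Span" unfolding Span_def using E3 by (auto intro: finite_PiE)
    show "\<Psi> ` K2 \<subseteq> Span"
    proof
      fix z assume "z \<in> \<Psi> ` K2"
      then obtain w where w: "w \<in> K2" "z = \<Psi> w" by blast
      define c where "c = restrict (\<lambda>e. \<Sum>j\<in>I. w j * g' e j) E3"
      have "\<Psi> w = restrict (\<lambda>k. \<Sum>e\<in>E3. f' e k * c e) I"
      proof (rule ext)
        fix k show "\<Psi> w k = restrict (\<lambda>k. \<Sum>e\<in>E3. f' e k * c e) I k"
        proof (cases "k \<in> I")
          case True
          have "w k * h k = (\<Sum>e\<in>E2. g e k * (\<Sum>j\<in>I. w j * f e j)) + (\<Sum>e\<in>E3. f' e k * (\<Sum>j\<in>I. w j * g' e j))"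
            by (rule contract_identity[OF I True]) (use eq True in blast)
          also have "\<dots> = (\<Sum>e\<in>E3. f' e k * c e)" using w(1) unfolding K2_def c_def by simp
          finally show ?thesis unfolding \<Psi>_def using True by simp
        qed (simp add: \<Psi>_def)
      qed
      moreover have "c \<in> PiE E3 (\<lambda>_. UNIV)" unfolding c_def by simp
      ultimately show "z \<in> Span" unfolding Span_def w(2) by (intro image_eqI[where x=c]) auto
    qed
    fix z
    show "card {a \<in> K2. \<Psi> a = z} \<le> ?q ^ card (I - ?S)"
    proof (cases "{a \<in> K2. \<Psi> a = z} = {}")
      case True show ?thesis by (subst True) simp
    next
      case False
      then obtain w0 where w0: "w0 \<in> K2" "\<Psi> w0 = z" by blast
      define gg where "gg w = restrict (\<lambda>i. w i - w0 i) (I - ?S)" for w :: "'i \<Rightarrow> 'a"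
      have inj: "inj_on gg {a \<in> K2. \<Psi> a = z}"
      proof (rule inj_onI)
        fix a b assume a: "a \<in> {a \<in> K2. \<Psi> a = z}" and b: "b \<in> {a \<in> K2. \<Psi> a = z}" and e: "gg a = gg b"
        have "\<forall>i\<in>I. a i = b i"
        proof
          fix i assume i: "i \<in> I"
          show "a i = b i"
          proof (cases "h i = 0")
            case True
            then have "i \<in> I - ?S" using i by simp
            then have "gg a i = gg b i" using e by simp
            then show ?thesis unfolding gg_def using \<open>i \<in> I - ?S\<close> by simp
          next
            case False
            have "\<Psi> a i = \<Psi> b i" using a b by simp
            then have "a i * h i = b i * h i" unfolding \<Psi>_def using i by simp
            then show ?thesis using False by simp
          qed
        qed
        moreover have "a \<in> PiE I (\<lambda>_. UNIV)" "b \<in> PiE I (\<lambda>_. UNIV)" using a b unfolding K2_def by auto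
        ultimately show "a = b" by (auto intro: PiE_ext)
      qed
      have img: "gg ` {a \<in> K2. \<Psi> a = z} \<subseteq> PiE (I - ?S) (\<lambda>_. UNIV)" unfolding gg_def by (intro image_subsetI) (simp only: restrict_PiE_iff, simp)
      have "card {a \<in> K2. \<Psi> a = z} \<le> card (PiE (I - ?S) (\<lambda>_. UNIV::'a set))"
        using card_inj_on_le[OF inj img] I by simp
      then show ?thesis using I by (simp add: card_PiE)
    qed
  qed
  also have "\<dots> \<le> ?q ^ card E3 * ?q ^ card (I - ?S)" using cSpan by simp
  finally have "card K2 * ?q ^ card E2 \<le> ?q ^ card E3 * ?q ^ card (I - ?S) * ?q ^ card E2"
    by (rule mult_le_mono1)
  then have "?q ^ card I \<le> ?q ^ card E3 * ?q ^ card (I - ?S) * ?q ^ card E2"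
    using c1 by linarith
  then have "?q ^ card I \<le> ?q ^ (card E3 + card (I - ?S) + card E2)" by (simp add: power_add)
  moreover have q1: "1 < ?q" using card_field_ge2[where 'a='a] by linarith
  ultimately have "card I \<le> card E3 + card (I - ?S) + card E2"
    using power_le_imp_le_exp by blast
  moreover have "card (I - ?S) = card I - card ?S" using I by (intro card_Diff_subset) auto
  moreover have "card ?S \<le> card I" using I by (intro card_mono) auto
  ultimately show ?thesis by linarith
qed

lemma slice_rank_diag:
  fixes fa :: "'e1 \<Rightarrow> 'i \<Rightarrow> 'a::{finite,field}" and ga :: "'e1 \<Rightarrow> 'i \<Rightarrow> 'i \<Rightarrow> 'a"
    and fb :: "'e2 \<Rightarrow> 'i \<Rightarrow> 'a" and gb :: "'e2 \<Rightarrow> 'i \<Rightarrow> 'i \<Rightarrow> 'a"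
    and fc :: "'e3 \<Rightarrow> 'i \<Rightarrow> 'a" and gc :: "'e3 \<Rightarrow> 'i \<Rightarrow> 'i \<Rightarrow> 'a"
  assumes I: "finite I" and E1: "finite E1" and E2: "finite E2" and E3: "finite E3"
    and eq: "\<forall>i\<in>I. \<forall>j\<in>I. \<forall>k\<in>I. (if i = j \<and> j = k then 1 else 0) =
       (\<Sum>e\<in>E1. fa e i * ga e j k) + (\<Sum>e\<in>E2. fb e j * gb e i k) + (\<Sum>e\<in>E3. fc e k * gc e i j)"
  shows "card I \<le> card E1 + card E2 + card E3"
proof -
  let ?q = "card (UNIV::'a set)"
  define K1 where "K1 = {u \<in> PiE I (\<lambda>_. UNIV::'a set). \<forall>e\<in>E1. (\<Sum>i\<in>I. u i * fa e i) = 0}"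
  have c1: "?q ^ card I \<le> card K1 * ?q ^ card E1" unfolding K1_def by (rule kernel_card[OF I E1])
  have KI: "K1 \<subseteq> PiE I (\<lambda>_. UNIV)" unfolding K1_def by blast
  have "restrict (\<lambda>_. 0) I \<in> K1" unfolding K1_def by simp
  then have Kne: "K1 \<noteq> {}" by blast
  have cl: "restrict (\<lambda>i. u i + c * v i) I \<in> K1" if "u \<in> K1" "v \<in> K1" for u v c
  proof -
    have "(\<Sum>i\<in>I. restrict (\<lambda>i. u i + c * v i) I i * fa e i) = 0" if e: "e \<in> E1" for e
    proof -
      have "(\<Sum>i\<in>I. restrict (\<lambda>i. u i + c * v i) I i * fa e i) = (\<Sum>i\<in>I. u i * fa e i) + c * (\<Sum>i\<in>I. v i * fa e i)"
        by (simp add: sum.distrib sum_distrib_left algebra_simps)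
      then show ?thesis using \<open>u \<in> K1\<close> \<open>v \<in> K1\<close> e unfolding K1_def by simp
    qed
    then show ?thesis unfolding K1_def by simp
  qed
  obtain u where u: "u \<in> K1" and cu: "card K1 \<le> ?q ^ card {i\<in>I. u i \<noteq> 0}"
    using support_exists[OF I KI Kne cl] by blast
  have "card K1 * ?q ^ card E1 \<le> ?q ^ card {i\<in>I. u i \<noteq> 0} * ?q ^ card E1"
    using cu by (rule mult_le_mono1)
  with c1 have "?q ^ card I \<le> ?q ^ card {i\<in>I. u i \<noteq> 0} * ?q ^ card E1" by (rule le_trans)
  then have "?q ^ card I \<le> ?q ^ (card {i\<in>I. u i \<noteq> 0} + card E1)" by (simp only: power_add)
  moreover have q1: "1 < ?q" using card_field_ge2[where 'a='a] by linarith
  ultimately have A: "card I \<le> card {i\<in>I. u i \<noteq> 0} + card E1"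
    using power_le_imp_le_exp by blast
  have u0: "(\<Sum>i\<in>I. u i * fa e i) = 0" if "e \<in> E1" for e using u that unfolding K1_def by simp
  have "card {j\<in>I. u j \<noteq> 0} \<le> card E2 + card E3"
  proof (rule diag2_rank[OF I E2 E3, where f=fb and g="\<lambda>e k. \<Sum>i\<in>I. u i * gb e i k"
        and f'=fc and g'="\<lambda>e j. \<Sum>i\<in>I. u i * gc e i j"], intro ballI)
    fix j k assume j: "j \<in> I" and k: "k \<in> I"
    have "(if j = k then u j else 0) = (\<Sum>i\<in>I. u i * (if i = j \<and> j = k then 1 else 0))"
    proof (cases "j = k")
      case True then show ?thesis using I j by (simp add: sum.delta'[of I j] if_distrib cong: if_cong)
    next
      case False then show ?thesis by simp
    qed
    also have "\<dots> = (\<Sum>i\<in>I. u i * ((\<Sum>e\<in>E1. fa e i * ga e j k) + (\<Sum>e\<in>E2. fb e j * gb e i k) + (\<Sum>e\<in>E3. fc e k * gc e i j)))"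
      using eq j k by (intro sum.cong) auto
    also have "\<dots> = (\<Sum>i\<in>I. \<Sum>e\<in>E1. ga e j k * (u i * fa e i)) + (\<Sum>i\<in>I. \<Sum>e\<in>E2. fb e j * (u i * gb e i k))
        + (\<Sum>i\<in>I. \<Sum>e\<in>E3. fc e k * (u i * gc e i j))"
      by (simp add: distrib_left sum_distrib_left sum.distrib algebra_simps)
    also have "\<dots> = (\<Sum>e\<in>E1. ga e j k * (\<Sum>i\<in>I. u i * fa e i)) + (\<Sum>e\<in>E2. fb e j * (\<Sum>i\<in>I. u i * gb e i k))
        + (\<Sum>e\<in>E3. fc e k * (\<Sum>i\<in>I. u i * gc e i j))"
      by (simp add: sum_distrib_left sum.swap[of _ I])
    also have "\<dots> = (\<Sum>e\<in>E2. fb e j * (\<Sum>i\<in>I. u i * gb e i k)) + (\<Sum>e\<in>E3. fc e k * (\<Sum>i\<in>I. u i * gc e i j))"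
      using u0 by simp
    finally show "(if j = k then u j else 0) = (\<Sum>e\<in>E2. fb e j * (\<Sum>i\<in>I. u i * gb e i k)) + (\<Sum>e\<in>E3. fc e k * (\<Sum>i\<in>I. u i * gc e i j))" .
  qed
  with A show ?thesis by linarith
qed

definition Dl :: "nat \<Rightarrow> (nat \<times> nat \<times> nat) set" where
  "Dl p = {e \<in> {0..p} \<times> {0..p} \<times> {0..p}. fst e + fst (snd e) + snd (snd e) \<le> p}"

definition mon :: "'a::comm_ring_1 \<Rightarrow> 'a \<Rightarrow> 'a \<Rightarrow> nat \<times> nat \<times> nat \<Rightarrow> 'a" where
  "mon u v w e = u ^ fst e * v ^ fst (snd e) * w ^ snd (snd e)"

lemma finite_Dl[simp]: "finite (Dl p)" unfolding Dl_def by simp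

lemma trinomial:
  fixes u v w :: "'a::comm_ring_1"
  shows "(u + v + w) ^ p = (\<Sum>a\<le>p. \<Sum>b\<le>p - a. of_nat ((p choose a) * (p - a choose b)) * mon u v w (a, b, p - a - b))"
proof -
  have "(u + v + w) ^ p = (u + (v + w)) ^ p" by (simp add: add.assoc)
  also have "\<dots> = (\<Sum>a\<le>p. of_nat (p choose a) * u ^ a * (v + w) ^ (p - a))" by (rule binomial_ring)
  also have "\<dots> = (\<Sum>a\<le>p. of_nat (p choose a) * u ^ a * (\<Sum>b\<le>p - a. of_nat (p - a choose b) * v ^ b * w ^ (p - a - b)))"
    by (simp add: binomial_ring)
  also have "\<dots> = (\<Sum>a\<le>p. \<Sum>b\<le>p - a. of_nat ((p choose a) * (p - a choose b)) * mon u v w (a, b, p - a - b))"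
    unfolding sum_distrib_left by (intro sum.cong refl) (simp add: mon_def of_nat_mult mult_ac)
  finally show ?thesis .
qed

lemma poly_expand:
  "\<exists>C::nat \<times> nat \<times> nat \<Rightarrow> 'a::comm_ring_1. \<forall>u v w. 1 - (u + v + w) ^ p = (\<Sum>e\<in>Dl p. C e * mon u v w e)"
proof -
  define D :: "nat \<times> nat \<times> nat \<Rightarrow> 'a" where
    "D e = (if fst e + fst (snd e) + snd (snd e) = p then of_nat ((p choose fst e) * (p - fst e choose fst (snd e))) else 0)" for e
  define C where "C e = (if e = (0, 0, 0) then 1 else 0) - D e" for e
  have "1 - (u + v + w) ^ p = (\<Sum>e\<in>Dl p. C e * mon u v w e)" for u v w :: 'a
  proof -
    have one: "(\<Sum>e\<in>Dl p. (if e = (0, 0, 0) then 1 else 0) * mon u v w e) = 1"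
    proof -
      have "(\<Sum>e\<in>Dl p. (if e = (0, 0, 0) then 1 else 0) * mon u v w e) = (\<Sum>e\<in>Dl p. if e = (0, 0, 0) then mon u v w e else 0)"
        by (intro sum.cong) auto
      also have "\<dots> = mon u v w (0, 0, 0)" by (subst sum.delta) (auto simp: Dl_def)
      finally show ?thesis by (simp add: mon_def)
    qed
    define Sg where "Sg = (SIGMA a:{..p}. {..p - a})"
    define \<phi> where "\<phi> x = (fst x, snd x, p - fst x - snd x)" for x :: "nat \<times> nat"
    have inj: "inj_on \<phi> Sg" unfolding \<phi>_def inj_on_def by auto
    have img: "\<phi> ` Sg = {e \<in> Dl p. fst e + fst (snd e) + snd (snd e) = p}"
    proof
      show "\<phi> ` Sg \<subseteq> {e \<in> Dl p. fst e + fst (snd e) + snd (snd e) = p}"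
        unfolding \<phi>_def Sg_def Dl_def by auto
      show "{e \<in> Dl p. fst e + fst (snd e) + snd (snd e) = p} \<subseteq> \<phi> ` Sg"
      proof
        fix e assume e: "e \<in> {e \<in> Dl p. fst e + fst (snd e) + snd (snd e) = p}"
        obtain a b c where abc: "e = (a, b, c)" by (cases e) auto
        have "(a, b) \<in> Sg" "e = \<phi> (a, b)" using e abc unfolding Sg_def \<phi>_def Dl_def by auto
        then show "e \<in> \<phi> ` Sg" by blast
      qed
    qed
    have "(\<Sum>e\<in>Dl p. D e * mon u v w e) = (\<Sum>e\<in>{e \<in> Dl p. fst e + fst (snd e) + snd (snd e) = p}. D e * mon u v w e)"
      by (rule sum.mono_neutral_right) (auto simp: D_def)
    also have "\<dots> = (\<Sum>x\<in>Sg. D (\<phi> x) * mon u v w (\<phi> x))"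
      unfolding img[symmetric] by (subst sum.reindex[OF inj]) simp
    also have "\<dots> = (\<Sum>a\<le>p. \<Sum>b\<le>p - a. D (\<phi> (a, b)) * mon u v w (\<phi> (a, b)))"
      unfolding Sg_def by (subst sum.Sigma) auto
    also have "\<dots> = (\<Sum>a\<le>p. \<Sum>b\<le>p - a. of_nat ((p choose a) * (p - a choose b)) * mon u v w (a, b, p - a - b))"
      by (intro sum.cong refl) (auto simp: D_def \<phi>_def)
    also have "\<dots> = (u + v + w) ^ p" by (rule trinomial[symmetric])
    finally have two: "(\<Sum>e\<in>Dl p. D e * mon u v w e) = (u + v + w) ^ p" .
    have "(\<Sum>e\<in>Dl p. C e * mon u v w e) = (\<Sum>e\<in>Dl p. (if e = (0, 0, 0) then 1 else 0) * mon u v w e) - (\<Sum>e\<in>Dl p. D e * mon u v w e)"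
      unfolding C_def by (simp add: sum_subtractf left_diff_distrib)
    then show ?thesis using one two by simp
  qed
  then show ?thesis by blast
qed

definition Mset :: "nat \<Rightarrow> 'c set \<Rightarrow> ('c \<Rightarrow> nat) set" where
  "Mset p D = {m \<in> PiE D (\<lambda>_. {0..p}). 3 * (\<Sum>d\<in>D. m d) \<le> p * card D}"

lemma finite_Mset: "finite D \<Longrightarrow> finite (Mset p D)"
  unfolding Mset_def by (rule finite_subset[OF _ finite_PiE[of D "\<lambda>_. {0..p}"]]) auto

lemma group_lemma:
  fixes X Y :: "'e \<Rightarrow> 'a::comm_ring_1" and f :: "'m \<Rightarrow> 'a"
  assumes G: "finite G" and M: "finite M" and img: "\<pi> ` G \<subseteq> M"
    and XY: "\<And>E. E \<in> G \<Longrightarrow> X E = f (\<pi> E) * Y E"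
  shows "(\<Sum>E\<in>G. X E) = (\<Sum>m\<in>M. f m * (\<Sum>E\<in>{E\<in>G. \<pi> E = m}. Y E))"
proof -
  have "(\<Sum>E\<in>G. X E) = (\<Sum>m\<in>M. \<Sum>E\<in>{E. E \<in> G \<and> \<pi> E = m}. X E)"
    by (rule sum.group[OF G M img, symmetric])
  also have "\<dots> = (\<Sum>m\<in>M. f m * (\<Sum>E\<in>{E\<in>G. \<pi> E = m}. Y E))"
    by (intro sum.cong refl) (auto simp: sum_distrib_left XY)
  finally show ?thesis .
qed

lemma delta_poly:
  fixes z :: "'a::{finite,field}"
  shows "1 - z ^ (card (UNIV::'a set) - 1) = (if z = 0 then 1 else 0)"
proof (cases "z = 0")
  case True
  have "card (UNIV::'a set) - 1 \<noteq> 0" using card_field_ge2[where 'a='a] by linarith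
  then show ?thesis using True by simp
next
  case False then show ?thesis using nonzero_pow_card by simp
qed

lemma tricolor_bound:
  fixes a b c :: "'i \<Rightarrow> 'c \<Rightarrow> 'a::{finite,field}"
  assumes I: "finite I" and D: "finite D"
    and tri: "\<forall>i\<in>I. \<forall>j\<in>I. \<forall>k\<in>I. (\<forall>d\<in>D. a i d + b j d + c k d = 0) \<longleftrightarrow> (i = j \<and> j = k)"
  shows "card I \<le> 3 * card (Mset (card (UNIV::'a set) - 1) D)"
proof -
  define p where "p = card (UNIV::'a set) - 1"
  define M where "M = Mset p D"
  have finM: "finite M" unfolding M_def using D by (rule finite_Mset)
  obtain C :: "nat \<times> nat \<times> nat \<Rightarrow> 'a" where C: "\<And>u v w. 1 - (u + v + w) ^ p = (\<Sum>e\<in>Dl p. C e * mon u v w e)"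
    using poly_expand[of p] by blast
  define P where "P = PiE D (\<lambda>_. Dl p)"
  have finP: "finite P" unfolding P_def using D by (intro finite_PiE) auto
  define A1 where "A1 E i = (\<Prod>d\<in>D. a i d ^ fst (E d))" for E :: "'c \<Rightarrow> nat \<times> nat \<times> nat" and i
  define A2 where "A2 E j = (\<Prod>d\<in>D. b j d ^ fst (snd (E d)))" for E :: "'c \<Rightarrow> nat \<times> nat \<times> nat" and j
  define A3 where "A3 E k = (\<Prod>d\<in>D. c k d ^ snd (snd (E d)))" for E :: "'c \<Rightarrow> nat \<times> nat \<times> nat" and k
  define CC where "CC E = (\<Prod>d\<in>D. C (E d))" for E :: "'c \<Rightarrow> nat \<times> nat \<times> nat"
  define X where "X E i j k = CC E * A1 E i * A2 E j * A3 E k" for E i j k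
  define s1 where "s1 E = (\<Sum>d\<in>D. fst (E d))" for E :: "'c \<Rightarrow> nat \<times> nat \<times> nat"
  define s2 where "s2 E = (\<Sum>d\<in>D. fst (snd (E d)))" for E :: "'c \<Rightarrow> nat \<times> nat \<times> nat"
  define s3 where "s3 E = (\<Sum>d\<in>D. snd (snd (E d)))" for E :: "'c \<Rightarrow> nat \<times> nat \<times> nat"
  define B where "B = p * card D"
  define G1 where "G1 = {E \<in> P. 3 * s1 E \<le> B}"
  define G2 where "G2 = {E \<in> P. \<not> 3 * s1 E \<le> B \<and> 3 * s2 E \<le> B}"
  define G3 where "G3 = {E \<in> P. \<not> 3 * s1 E \<le> B \<and> \<not> 3 * s2 E \<le> B}"
  define \<pi>1 where "\<pi>1 E = restrict (\<lambda>d. fst (E d)) D" for E :: "'c \<Rightarrow> nat \<times> nat \<times> nat"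
  define \<pi>2 where "\<pi>2 E = restrict (\<lambda>d. fst (snd (E d))) D" for E :: "'c \<Rightarrow> nat \<times> nat \<times> nat"
  define \<pi>3 where "\<pi>3 E = restrict (\<lambda>d. snd (snd (E d))) D" for E :: "'c \<Rightarrow> nat \<times> nat \<times> nat"
  have deg: "s1 E + s2 E + s3 E \<le> B" if "E \<in> P" for E
  proof -
    have "s1 E + s2 E + s3 E = (\<Sum>d\<in>D. fst (E d) + fst (snd (E d)) + snd (snd (E d)))"
      unfolding s1_def s2_def s3_def by (simp add: sum.distrib)
    also have "\<dots> \<le> (\<Sum>d\<in>D. p)"
      using that unfolding P_def Dl_def by (intro sum_mono) auto
    finally show ?thesis unfolding B_def by (simp add: mult.commute)
  qed
  have expand: "(if i = j \<and> j = k then 1 else 0) = (\<Sum>E\<in>P. X E i j k)"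
    if i: "i \<in> I" and j: "j \<in> I" and k: "k \<in> I" for i j k
  proof -
    have "(if i = j \<and> j = k then 1 else (0::'a)) = (\<Prod>d\<in>D. 1 - (a i d + b j d + c k d) ^ p)"
    proof -
      have "(\<Prod>d\<in>D. 1 - (a i d + b j d + c k d) ^ p) = (\<Prod>d\<in>D. if a i d + b j d + c k d = 0 then 1 else 0)"
        unfolding p_def by (intro prod.cong refl delta_poly)
      also have "\<dots> = (if (\<forall>d\<in>D. a i d + b j d + c k d = 0) then 1 else 0)"
        using D by (induction D rule: finite_induct) auto
      also have "\<dots> = (if i = j \<and> j = k then 1 else 0)" using tri i j k by simp
      finally show ?thesis by simp
    qed
    also have "\<dots> = (\<Prod>d\<in>D. \<Sum>e\<in>Dl p. C e * mon (a i d) (b j d) (c k d) e)"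
      using C by simp
    also have "\<dots> = (\<Sum>E\<in>P. \<Prod>d\<in>D. C (E d) * mon (a i d) (b j d) (c k d) (E d))"
      unfolding P_def by (rule prod_sum_PiE[OF D]) simp
    also have "\<dots> = (\<Sum>E\<in>P. X E i j k)"
      by (intro sum.cong refl) (simp add: X_def CC_def A1_def A2_def A3_def mon_def prod.distrib)
    finally show ?thesis .
  qed
  have split: "(\<Sum>E\<in>P. X E i j k) = (\<Sum>E\<in>G1. X E i j k) + (\<Sum>E\<in>G2. X E i j k) + (\<Sum>E\<in>G3. X E i j k)" for i j k
  proof -
    have "(\<Sum>E\<in>P. X E i j k) = (\<Sum>E\<in>P. (if 3 * s1 E \<le> B then X E i j k else 0)
        + (if \<not> 3 * s1 E \<le> B \<and> 3 * s2 E \<le> B then X E i j k else 0)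
        + (if \<not> 3 * s1 E \<le> B \<and> \<not> 3 * s2 E \<le> B then X E i j k else 0))"
      by (intro sum.cong refl) auto
    also have "\<dots> = (\<Sum>E\<in>G1. X E i j k) + (\<Sum>E\<in>G2. X E i j k) + (\<Sum>E\<in>G3. X E i j k)"
      unfolding G1_def G2_def G3_def sum.distrib using finP by (simp add: sum.inter_filter)
    finally show ?thesis .
  qed
  have Dl_le: "e \<in> Dl p \<Longrightarrow> fst e \<le> p \<and> fst (snd e) \<le> p \<and> snd (snd e) \<le> p" for e
    unfolding Dl_def by auto
  have Pb: "fst (E d) \<le> p \<and> fst (snd (E d)) \<le> p \<and> snd (snd (E d)) \<le> p" if "E \<in> P" "d \<in> D" for E d
  proof -
    have "E d \<in> Dl p" using that unfolding P_def by (rule PiE_mem)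
    then show ?thesis by (rule Dl_le)
  qed
  have img1: "\<pi>1 ` G1 \<subseteq> M"
  proof
    fix m assume "m \<in> \<pi>1 ` G1"
    then obtain E where E: "E \<in> G1" "m = \<pi>1 E" by blast
    have "(\<Sum>d\<in>D. m d) = s1 E" unfolding E(2) \<pi>1_def s1_def by simp
    then show "m \<in> M" using E Pb[of E] unfolding M_def Mset_def G1_def \<pi>1_def B_def by auto
  qed
  have img2: "\<pi>2 ` G2 \<subseteq> M"
  proof
    fix m assume "m \<in> \<pi>2 ` G2"
    then obtain E where E: "E \<in> G2" "m = \<pi>2 E" by blast
    have "(\<Sum>d\<in>D. m d) = s2 E" unfolding E(2) \<pi>2_def s2_def by simp
    then show "m \<in> M" using E Pb[of E] unfolding M_def Mset_def G2_def \<pi>2_def B_def by auto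
  qed
  have img3: "\<pi>3 ` G3 \<subseteq> M"
  proof
    fix m assume "m \<in> \<pi>3 ` G3"
    then obtain E where E: "E \<in> G3" "m = \<pi>3 E" by blast
    have "(\<Sum>d\<in>D. m d) = s3 E" unfolding E(2) \<pi>3_def s3_def by simp
    moreover have "3 * s3 E \<le> B" using E(1) deg unfolding G3_def by fastforce
    ultimately show "m \<in> M" using E Pb[of E] unfolding M_def Mset_def G3_def \<pi>3_def B_def by auto
  qed
  define f1 where "f1 m i = (\<Prod>d\<in>D. a i d ^ m d)" for m :: "'c \<Rightarrow> nat" and i
  define f2 where "f2 m j = (\<Prod>d\<in>D. b j d ^ m d)" for m :: "'c \<Rightarrow> nat" and j
  define f3 where "f3 m k = (\<Prod>d\<in>D. c k d ^ m d)" for m :: "'c \<Rightarrow> nat" and k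
  define g1 where "g1 m j k = (\<Sum>E\<in>{E\<in>G1. \<pi>1 E = m}. CC E * A2 E j * A3 E k)" for m j k
  define g2 where "g2 m i k = (\<Sum>E\<in>{E\<in>G2. \<pi>2 E = m}. CC E * A1 E i * A3 E k)" for m i k
  define g3 where "g3 m i j = (\<Sum>E\<in>{E\<in>G3. \<pi>3 E = m}. CC E * A1 E i * A2 E j)" for m i j
  have finG1: "finite G1" "finite G2" "finite G3" unfolding G1_def G2_def G3_def using finP by auto
  have sum1: "(\<Sum>E\<in>G1. X E i j k) = (\<Sum>m\<in>M. f1 m i * g1 m j k)" for i j k
    unfolding g1_def
  proof (rule group_lemma[OF finG1(1) finM img1])
    fix E assume "E \<in> G1"
    have "A1 E i = f1 (\<pi>1 E) i" unfolding A1_def f1_def \<pi>1_def by (intro prod.cong refl) simp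
    then show "X E i j k = f1 (\<pi>1 E) i * (CC E * A2 E j * A3 E k)" unfolding X_def by (simp add: mult_ac)
  qed
  have sum2: "(\<Sum>E\<in>G2. X E i j k) = (\<Sum>m\<in>M. f2 m j * g2 m i k)" for i j k
    unfolding g2_def
  proof (rule group_lemma[OF finG1(2) finM img2])
    fix E assume "E \<in> G2"
    have "A2 E j = f2 (\<pi>2 E) j" unfolding A2_def f2_def \<pi>2_def by (intro prod.cong refl) simp
    then show "X E i j k = f2 (\<pi>2 E) j * (CC E * A1 E i * A3 E k)" unfolding X_def by (simp add: mult_ac)
  qed
  have sum3: "(\<Sum>E\<in>G3. X E i j k) = (\<Sum>m\<in>M. f3 m k * g3 m i j)" for i j k
    unfolding g3_def
  proof (rule group_lemma[OF finG1(3) finM img3])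
    fix E assume "E \<in> G3"
    have "A3 E k = f3 (\<pi>3 E) k" unfolding A3_def f3_def \<pi>3_def by (intro prod.cong refl) simp
    then show "X E i j k = f3 (\<pi>3 E) k * (CC E * A1 E i * A2 E j)" unfolding X_def by (simp add: mult_ac)
  qed
  have "card I \<le> card M + card M + card M"
  proof (rule slice_rank_diag[OF I finM finM finM, where fa=f1 and ga=g1 and fb=f2 and gb=g2 and fc=f3 and gc=g3])
    show "\<forall>i\<in>I. \<forall>j\<in>I. \<forall>k\<in>I. (if i = j \<and> j = k then 1 else 0) =
       (\<Sum>e\<in>M. f1 e i * g1 e j k) + (\<Sum>e\<in>M. f2 e j * g2 e i k) + (\<Sum>e\<in>M. f3 e k * g3 e i j)"
      using expand split sum1 sum2 sum3 by simp
  qed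
  then show ?thesis unfolding M_def p_def by simp
qed

lemma Mset_card_le_fx:
  fixes x :: real
  assumes D: "finite D" and q: "q \<ge> 1" and x: "0 < x" "x < 1"
  shows "real (card (Mset (q - 1) D)) \<le> ((\<Sum>j<q. x ^ j) / x powr ((real q - 1) / 3)) ^ card D"
proof -
  define p where "p = q - 1"
  define n where "n = card D"
  define t where "t = real (p * n) / 3"
  define Q where "Q = PiE D (\<lambda>_. {0..p})"
  have finQ: "finite Q" unfolding Q_def using D by (intro finite_PiE) auto
  have MQ: "Mset p D \<subseteq> Q" unfolding Mset_def Q_def by auto
  have rp: "real p = real q - 1" unfolding p_def using q by simp
  have "real (card (Mset p D)) = (\<Sum>m\<in>Mset p D. 1)" by simp
  also have "\<dots> \<le> (\<Sum>m\<in>Mset p D. x powr (real (sum m D) - t))"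
  proof (rule sum_mono)
    fix m assume m: "m \<in> Mset p D"
    then have "3 * sum m D \<le> p * n" unfolding Mset_def n_def by simp
    then have "real (sum m D) - t \<le> 0" unfolding t_def by linarith
    then have "x powr 0 \<le> x powr (real (sum m D) - t)" using x by (intro powr_mono') auto
    then show "1 \<le> x powr (real (sum m D) - t)" using x by simp
  qed
  also have "\<dots> \<le> (\<Sum>m\<in>Q. x powr (real (sum m D) - t))"
    by (rule sum_mono2[OF finQ MQ]) simp
  also have "\<dots> = (\<Sum>m\<in>Q. (\<Prod>d\<in>D. x ^ m d) * x powr (- t))"
  proof (intro sum.cong refl)
    fix m
    have "x powr (real (sum m D) - t) = x powr (real (sum m D)) * x powr (- t)"
      by (simp add: powr_add[symmetric])
    also have "\<dots> = x ^ (sum m D) * x powr (- t)" using x powr_realpow[of x "sum m D"] by (simp del: of_nat_sum)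
    also have "\<dots> = (\<Prod>d\<in>D. x ^ m d) * x powr (- t)" by (simp add: power_sum)
    finally show "x powr (real (sum m D) - t) = (\<Prod>d\<in>D. x ^ m d) * x powr (- t)" .
  qed
  also have "\<dots> = (\<Prod>d\<in>D. \<Sum>j\<in>{0..p}. x ^ j) * x powr (- t)"
    unfolding Q_def sum_distrib_right[symmetric] using prod_sum_PiE[OF D, of "\<lambda>_. {0..p}" "\<lambda>d j. x ^ j"]
    by simp
  also have "\<dots> = (\<Sum>j<q. x ^ j) ^ n * x powr (- t)"
  proof -
    have "{0..p} = {..<q}" unfolding p_def using q by auto
    then show ?thesis unfolding n_def by simp
  qed
  also have "\<dots> = ((\<Sum>j<q. x ^ j) / x powr ((real q - 1) / 3)) ^ n"
  proof -
    have "(x powr ((real q - 1) / 3)) ^ n = x powr (real n * ((real q - 1) / 3))"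
      using x by (simp add: powr_power)
    also have "\<dots> = x powr t"
    proof -
      have "real n * ((real q - 1) / 3) = t" unfolding t_def by (simp only: rp[symmetric] of_nat_mult) (simp add: mult.commute)
      then show ?thesis by simp
    qed
    finally have "(x powr ((real q - 1) / 3)) ^ n = x powr t" .
    then have "((\<Sum>j<q. x ^ j) / x powr ((real q - 1) / 3)) ^ n = (\<Sum>j<q. x ^ j) ^ n / x powr t"
      by (simp only: power_divide)
    also have "\<dots> = (\<Sum>j<q. x ^ j) ^ n * x powr (- t)"
      by (simp only: powr_minus divide_inverse)
    finally show ?thesis by (rule sym)
  qed
  finally show ?thesis unfolding p_def n_def .
qed

lemma Mset_card_le_Gamma:
  assumes D: "finite D" and q: "q \<ge> 1"
  shows "real (card (Mset (q - 1) D)) \<le> Gamma_q q ^ card D"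
proof -
  define S where "S = {(\<Sum>j<q. x ^ j) / x powr ((real q - 1) / 3) | x::real. 0 < x \<and> x < 1}"
  have G: "Gamma_q q = Inf S" unfolding Gamma_q_def J_fun_def S_def using q by simp
  show ?thesis
  proof (cases "card D = 0")
    case True
    then have "D = {}" using D by simp
    then have "Mset (q - 1) D = {\<lambda>_. undefined}" unfolding Mset_def by simp
    then show ?thesis using True by simp
  next
    case False
    then have n: "0 < card D" by simp
    define r where "r = root (card D) (real (card (Mset (q - 1) D)))"
    have r0: "0 \<le> r" unfolding r_def by (rule real_root_ge_zero) simp
    have "r \<le> Inf S"
    proof (rule cInf_greatest)
      have "(\<Sum>j<q. (1/2::real) ^ j) / (1/2) powr ((real q - 1) / 3) \<in> S" unfolding S_def by force
      then show "S \<noteq> {}" by blast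
    next
      fix y assume "y \<in> S"
      then obtain x :: real where x: "0 < x" "x < 1" and y: "y = (\<Sum>j<q. x ^ j) / x powr ((real q - 1) / 3)"
        unfolding S_def by blast
      have y0: "0 \<le> y" unfolding y using x by (intro divide_nonneg_nonneg sum_nonneg) auto
      have "real (card (Mset (q - 1) D)) \<le> y ^ card D" unfolding y by (rule Mset_card_le_fx[OF D q x])
      then have "r \<le> root (card D) (y ^ card D)" unfolding r_def using n by simp
      also have "\<dots> = y" using n y0 by (rule real_root_power_cancel)
      finally show "r \<le> y" .
    qed
    then have "r ^ card D \<le> (Inf S) ^ card D" using r0 by (rule power_mono)
    moreover have "r ^ card D = real (card (Mset (q - 1) D))" unfolding r_def using n by simp
    ultimately show ?thesis using G by simp
  qed
qed

lemma tricolor_power: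
  fixes a b c :: "'i \<Rightarrow> 'c \<Rightarrow> 'a::{finite,field}"
  assumes I: "finite I" and D: "finite D"
    and tri: "\<forall>i\<in>I. \<forall>j\<in>I. \<forall>k\<in>I. (\<forall>d\<in>D. a i d + b j d + c k d = 0) \<longleftrightarrow> (i = j \<and> j = k)"
  shows "real (card I) ^ m \<le> 3 * (Gamma_q (card (UNIV::'a set)) ^ card D) ^ m"
proof -
  define I' where "I' = PiE {0..<m} (\<lambda>_. I)"
  define D' where "D' = {0..<m} \<times> D"
  define a' where "a' f = (\<lambda>(j, d). a (f j) d)" for f :: "nat \<Rightarrow> 'i"
  define b' where "b' f = (\<lambda>(j, d). b (f j) d)" for f :: "nat \<Rightarrow> 'i"
  define c' where "c' f = (\<lambda>(j, d). c (f j) d)" for f :: "nat \<Rightarrow> 'i"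
  have finI': "finite I'" unfolding I'_def using I by (intro finite_PiE) auto
  have finD': "finite D'" unfolding D'_def using D by simp
  have tri': "\<forall>f\<in>I'. \<forall>g\<in>I'. \<forall>h\<in>I'. (\<forall>e\<in>D'. a' f e + b' g e + c' h e = 0) \<longleftrightarrow> (f = g \<and> g = h)"
  proof (intro ballI)
    fix f g h assume f: "f \<in> I'" and g: "g \<in> I'" and h: "h \<in> I'"
    show "(\<forall>e\<in>D'. a' f e + b' g e + c' h e = 0) \<longleftrightarrow> (f = g \<and> g = h)"
    proof
      assume z: "\<forall>e\<in>D'. a' f e + b' g e + c' h e = 0"
      have eqj: "f j = g j \<and> g j = h j" for j
      proof (cases "j \<in> {0..<m}")
        case True
        have "\<forall>d\<in>D. a (f j) d + b (g j) d + c (h j) d = 0"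
          using z True unfolding D'_def a'_def b'_def c'_def by auto
        moreover have "f j \<in> I" "g j \<in> I" "h j \<in> I" using f g h True unfolding I'_def by auto
        ultimately show ?thesis using tri by blast
      next
        case False
        then show ?thesis using f g h unfolding I'_def by (simp add: PiE_def extensional_def)
      qed
      then show "f = g \<and> g = h" by auto
    next
      assume "f = g \<and> g = h"
      then have fg: "g = f" "h = f" by auto
      show "\<forall>e\<in>D'. a' f e + b' g e + c' h e = 0"
      proof
        fix e assume e: "e \<in> D'"
        then obtain j d where jd: "e = (j, d)" "j \<in> {0..<m}" "d \<in> D" unfolding D'_def by blast
        have "f j \<in> I" using f jd unfolding I'_def by auto
        then have "\<forall>d\<in>D. a (f j) d + b (f j) d + c (f j) d = 0" using tri by blast
        then show "a' f e + b' g e + c' h e = 0" unfolding fg a'_def b'_def c'_def jd using jd by simp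
      qed
    qed
  qed
  have "card I' \<le> 3 * card (Mset (card (UNIV::'a set) - 1) D')"
    by (rule tricolor_bound[OF finI' finD' tri'])
  then have "real (card I') \<le> 3 * real (card (Mset (card (UNIV::'a set) - 1) D'))" by linarith
  also have "\<dots> \<le> 3 * Gamma_q (card (UNIV::'a set)) ^ card D'"
    using Mset_card_le_Gamma[OF finD', of "card (UNIV::'a set)"] card_field_ge2[where 'a='a] by simp
  also have "card D' = card D * m" unfolding D'_def by (simp add: card_cartesian_product)
  also have "card I' = card I ^ m" unfolding I'_def by (simp add: card_PiE)
  finally show ?thesis by (simp add: power_mult)
qed

lemma tricolor_Gamma:
  fixes a b c :: "'i \<Rightarrow> 'c \<Rightarrow> 'a::{finite,field}"
  assumes I: "finite I" and D: "finite D"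
    and tri: "\<forall>i\<in>I. \<forall>j\<in>I. \<forall>k\<in>I. (\<forall>d\<in>D. a i d + b j d + c k d = 0) \<longleftrightarrow> (i = j \<and> j = k)"
  shows "real (card I) \<le> Gamma_q (card (UNIV::'a set)) ^ card D"
proof (rule ccontr)
  define G where "G = Gamma_q (card (UNIV::'a set)) ^ card D"
  assume "\<not> real (card I) \<le> Gamma_q (card (UNIV::'a set)) ^ card D"
  then have lt: "G < real (card I)" unfolding G_def by simp
  have "restrict (\<lambda>_. 0) D \<in> Mset (card (UNIV::'a set) - 1) D" unfolding Mset_def by simp
  then have "card (Mset (card (UNIV::'a set) - 1) D) \<ge> 1"
    using finite_Mset[OF D] by (metis One_nat_def Suc_leI card_gt_0_iff empty_iff)
  then have G1: "1 \<le> G" unfolding G_def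
    using Mset_card_le_Gamma[OF D, of "card (UNIV::'a set)"] card_field_ge2[where 'a='a] by simp
  define r where "r = real (card I) / G"
  have r1: "1 < r" unfolding r_def using lt G1 by simp
  obtain m where "3 < r ^ m" using real_arch_pow[OF r1] by blast
  moreover have "r ^ m \<le> 3"
  proof -
    have "real (card I) ^ m \<le> 3 * G ^ m" unfolding G_def by (rule tricolor_power[OF I D tri])
    then show ?thesis unfolding r_def using G1 by (simp add: power_divide divide_le_eq)
  qed
  ultimately show False by simp
qed

lemma card_filter_sum: "finite V \<Longrightarrow> card {u\<in>V. P u} = (\<Sum>u\<in>V. if P u then 1 else 0)"
  by (simp add: sum.inter_filter[symmetric])

lemma indep_set:
  fixes V :: "'v set" and N :: "'v \<Rightarrow> 'v set"
  assumes "finite V" and "\<forall>v\<in>V. card (N v \<inter> V) \<le> r"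
  shows "\<exists>S \<subseteq> V. (\<forall>u\<in>S. \<forall>w\<in>S. u \<noteq> w \<longrightarrow> w \<notin> N u) \<and> card V \<le> (2 * r + 1) * card S"
  using assms
proof (induction "card V" arbitrary: V rule: less_induct)
  case less
  note fin = less.prems(1) and deg = less.prems(2)
  show ?case
  proof (cases "V = {}")
    case True then show ?thesis by auto
  next
    case False
    define out where "out v = card (N v \<inter> V)" for v
    define inn where "inn v = card {u\<in>V. v \<in> N u}" for v
    have dc: "(\<Sum>v\<in>V. inn v) = (\<Sum>v\<in>V. out v)"
    proof -
      have "(\<Sum>v\<in>V. inn v) = (\<Sum>v\<in>V. \<Sum>u\<in>V. if v \<in> N u then 1 else 0)"
        unfolding inn_def using fin by (simp add: card_filter_sum)
      also have "\<dots> = (\<Sum>u\<in>V. \<Sum>v\<in>V. if v \<in> N u then 1 else 0)" by (rule sum.swap)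
      also have "\<dots> = (\<Sum>u\<in>V. out u)"
      proof (intro sum.cong refl)
        fix u
        have "N u \<inter> V = {v\<in>V. v \<in> N u}" by auto
        then show "(\<Sum>v\<in>V. if v \<in> N u then 1 else 0) = out u" unfolding out_def using fin
          by (simp add: card_filter_sum)
      qed
      finally show ?thesis .
    qed
    have "\<exists>v\<in>V. out v + inn v \<le> 2 * r"
    proof (rule ccontr)
      assume "\<not> (\<exists>v\<in>V. out v + inn v \<le> 2 * r)"
      then have "\<forall>v\<in>V. 2 * r + 1 \<le> out v + inn v" by auto
      then have "(\<Sum>v\<in>V. 2 * r + 1) \<le> (\<Sum>v\<in>V. out v + inn v)" by (intro sum_mono) auto
      also have "\<dots> = 2 * (\<Sum>v\<in>V. out v)" using dc by (simp add: sum.distrib)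
      also have "\<dots> \<le> 2 * (\<Sum>v\<in>V. r)" using deg unfolding out_def by (intro mult_le_mono2 sum_mono) auto
      finally have "(2 * r + 1) * card V \<le> 2 * r * card V" by simp
      moreover have "card V > 0" using fin False by (simp add: card_gt_0_iff)
      ultimately show False by simp
    qed
    then obtain v where v: "v \<in> V" "out v + inn v \<le> 2 * r" by blast
    define V' where "V' = V - {v} - (N v \<inter> V) - {u\<in>V. v \<in> N u}"
    have V'V: "V' \<subseteq> V" unfolding V'_def by blast
    have finV': "finite V'" using fin V'V finite_subset by blast
    have lt: "card V' < card V" using v(1) fin V'V unfolding V'_def by (intro psubset_card_mono) auto
    have degV': "\<forall>u\<in>V'. card (N u \<inter> V') \<le> r"
    proof
      fix u assume u: "u \<in> V'"
      have "card (N u \<inter> V') \<le> card (N u \<inter> V)" using V'V fin by (intro card_mono) auto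
      moreover have "u \<in> V" using u V'V by blast
      then have "card (N u \<inter> V) \<le> r" using deg by blast
      ultimately show "card (N u \<inter> V') \<le> r" by linarith
    qed
    obtain S' where S': "S' \<subseteq> V'" "\<forall>u\<in>S'. \<forall>w\<in>S'. u \<noteq> w \<longrightarrow> w \<notin> N u"
      "card V' \<le> (2 * r + 1) * card S'"
      using less.hyps[OF lt finV' degV'] by blast
    have "V \<subseteq> V' \<union> {v} \<union> (N v \<inter> V) \<union> {u\<in>V. v \<in> N u}" unfolding V'_def by blast
    then have "card V \<le> card (V' \<union> {v} \<union> (N v \<inter> V) \<union> {u\<in>V. v \<in> N u})"
      using fin finV' by (intro card_mono) auto
    also have "\<dots> \<le> card (V' \<union> {v} \<union> (N v \<inter> V)) + card {u\<in>V. v \<in> N u}" by (rule card_Un_le)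
    also have "\<dots> \<le> card (V' \<union> {v}) + card (N v \<inter> V) + card {u\<in>V. v \<in> N u}"
      using card_Un_le[of "V' \<union> {v}" "N v \<inter> V"] by linarith
    also have "\<dots> \<le> card V' + 1 + out v + inn v"
      unfolding out_def inn_def using card_Un_le[of V' "{v}"] by simp
    finally have cV: "card V \<le> card V' + 1 + 2 * r" using v(2) by linarith
    have vS': "v \<notin> S'" using S'(1) unfolding V'_def by blast
    have finS': "finite S'" using S'(1) finV' finite_subset by blast
    show ?thesis
    proof (intro exI[of _ "insert v S'"] conjI)
      show "insert v S' \<subseteq> V" using S'(1) V'V v(1) by blast
      show "\<forall>u\<in>insert v S'. \<forall>w\<in>insert v S'. u \<noteq> w \<longrightarrow> w \<notin> N u"
      proof (intro ballI impI)
        fix u w assume u: "u \<in> insert v S'" and w: "w \<in> insert v S'" and uw: "u \<noteq> w"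
        show "w \<notin> N u"
        proof (cases "u = v")
          case True
          then have "w \<in> V'" using w uw S'(1) by auto
          then show ?thesis using True unfolding V'_def by auto
        next
          case False
          then have uS: "u \<in> S'" using u by auto
          show ?thesis
          proof (cases "w = v")
            case True
            have "u \<in> V'" using uS S'(1) by auto
            then show ?thesis using True unfolding V'_def by auto
          next
            case False
            then have "w \<in> S'" using w by auto
            then show ?thesis using S'(2) uS uw by blast
          qed
        qed
      qed
      have "card (insert v S') = card S' + 1" using vS' finS' by simp
      then show "card V \<le> (2 * r + 1) * card (insert v S')" using cV S'(3) by simp
    qed
  qed
qed

lemma Gamma_pow_ge1:
  assumes D: "finite D" and q: "q \<ge> 1"
  shows "1 \<le> Gamma_q q ^ card D"
proof -
  have "restrict (\<lambda>_. 0) D \<in> Mset (q - 1) D" unfolding Mset_def by simp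
  then have "Mset (q - 1) D \<noteq> {}" by blast
  then have "card (Mset (q - 1) D) \<ge> 1" using finite_Mset[OF D] by (simp add: Suc_le_eq card_gt_0_iff)
  then show ?thesis using Mset_card_le_Gamma[OF D q] by simp
qed

theorem lemma6p1:
  fixes x y :: "nat \<Rightarrow> nat \<Rightarrow> 'a::{finite,field}"
    and \<alpha> \<beta> :: 'a and n t L :: nat
  assumes "t > 0"
    and "\<forall>i\<in>{1..L}. x i \<in> Fqn n"
    and "\<forall>i\<in>{1..L}. y i \<in> Fqn n"
    and "inj_on x {1..L}"
    and "inj_on y {1..L}"
    and "\<alpha> \<noteq> 0" and "\<beta> \<noteq> 0"
    and "real L \<ge> 4 * real t * (Gamma_q (card (UNIV :: 'a set))) ^ n"
  shows "\<exists>i\<in>{1..L}. card {(i', i''). i' \<in> {1..L} - {i} \<and> i'' \<in> {1..L} - {i} \<and>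
            (\<lambda>k. \<alpha> * x i' k + \<beta> * y i'' k) = (\<lambda>k. \<alpha> * x i k + \<beta> * y i k)} \<ge> t"
proof (rule ccontr)
  note t0 = assms(1) and xF = assms(2) and yF = assms(3) and injx = assms(4) and injy = assms(5)
    and a0 = assms(6) and b0 = assms(7) and Lbig = assms(8)
  define Bs where "Bs i = {(i', i''). i' \<in> {1..L} - {i} \<and> i'' \<in> {1..L} - {i} \<and>
            (\<lambda>k. \<alpha> * x i' k + \<beta> * y i'' k) = (\<lambda>k. \<alpha> * x i k + \<beta> * y i k)}" for i
  assume "\<not> (\<exists>i\<in>{1..L}. card (Bs i) \<ge> t)"
  then have small: "\<forall>i\<in>{1..L}. card (Bs i) \<le> t - 1" by auto
  define N where "N i = fst ` Bs i" for i
  have finB: "finite (Bs i)" for i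
    by (rule finite_subset[of _ "{1..L} \<times> {1..L}"]) (auto simp: Bs_def)
  have degN: "\<forall>v\<in>{1..L}. card (N v \<inter> {1..L}) \<le> t - 1"
  proof
    fix v assume v: "v \<in> {1..L}"
    have "card (N v \<inter> {1..L}) \<le> card (N v)" unfolding N_def using finB by (intro card_mono) auto
    also have "\<dots> \<le> card (Bs v)" unfolding N_def using finB by (rule card_image_le)
    finally show "card (N v \<inter> {1..L}) \<le> t - 1" using small v by force
  qed
  obtain S where S: "S \<subseteq> {1..L}" and indep: "\<forall>u\<in>S. \<forall>w\<in>S. u \<noteq> w \<longrightarrow> w \<notin> N u"
    and cS: "card {1..L} \<le> (2 * (t - 1) + 1) * card S"
    using indep_set[of "{1..L}" N "t - 1"] degN by auto
  define a where "a i = (\<lambda>d. \<alpha> * x i d)" for i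
  define b where "b i = (\<lambda>d. \<beta> * y i d)" for i
  define c where "c i = (\<lambda>d. - (\<alpha> * x i d + \<beta> * y i d))" for i
  have tri: "\<forall>i\<in>S. \<forall>j\<in>S. \<forall>k\<in>S. (\<forall>d\<in>{0..<n}. a i d + b j d + c k d = 0) \<longleftrightarrow> (i = j \<and> j = k)"
  proof (intro ballI)
    fix i j k assume i: "i \<in> S" and j: "j \<in> S" and k: "k \<in> S"
    have iL: "i \<in> {1..L}" and jL: "j \<in> {1..L}" and kL: "k \<in> {1..L}" using i j k S by auto
    show "(\<forall>d\<in>{0..<n}. a i d + b j d + c k d = 0) \<longleftrightarrow> (i = j \<and> j = k)"
    proof
      assume z: "\<forall>d\<in>{0..<n}. a i d + b j d + c k d = 0"
      have eqf: "(\<lambda>d. \<alpha> * x i d + \<beta> * y j d) = (\<lambda>d. \<alpha> * x k d + \<beta> * y k d)"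
      proof
        fix d show "\<alpha> * x i d + \<beta> * y j d = \<alpha> * x k d + \<beta> * y k d"
        proof (cases "d < n")
          case True
          then have "a i d + b j d + c k d = 0" using z by simp
          then show ?thesis unfolding a_def b_def c_def by (metis add_uminus_conv_diff eq_iff_diff_eq_0)
        next
          case False
          have "x i \<in> Fqn n" "y j \<in> Fqn n" "x k \<in> Fqn n" "y k \<in> Fqn n"
            using xF yF iL jL kL by blast+
          then have "x i d = 0" "y j d = 0" "x k d = 0" "y k d = 0"
            using False unfolding Fqn_def by simp_all
          then show ?thesis by simp
        qed
      qed
      show "i = j \<and> j = k"
      proof (rule ccontr)
        assume ne: "\<not> (i = j \<and> j = k)"
        have ik: "i \<noteq> k"
        proof
          assume "i = k"
          have "\<forall>d. \<beta> * y j d = \<beta> * y k d"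
          proof
            fix d have "\<alpha> * x i d + \<beta> * y j d = \<alpha> * x k d + \<beta> * y k d" using fun_cong[OF eqf, of d] by simp
            then show "\<beta> * y j d = \<beta> * y k d" using \<open>i = k\<close> by simp
          qed
          then have "y j = y k" using b0 by auto
          then have "j = k" using injy jL kL by (auto dest: inj_onD)
          then show False using ne \<open>i = k\<close> by simp
        qed
        have jk: "j \<noteq> k"
        proof
          assume "j = k"
          have "\<forall>d. \<alpha> * x i d = \<alpha> * x k d"
          proof
            fix d have "\<alpha> * x i d + \<beta> * y j d = \<alpha> * x k d + \<beta> * y k d" using fun_cong[OF eqf, of d] by simp
            then show "\<alpha> * x i d = \<alpha> * x k d" using \<open>j = k\<close> by simp
          qed
          then have "x i = x k" using a0 by auto
          then have "i = k" using injx iL kL by (auto dest: inj_onD)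
          then show False using ik by simp
        qed
        have "(i, j) \<in> Bs k" unfolding Bs_def
        proof (rule CollectI, unfold case_prod_conv, intro conjI)
          show "i \<in> {1..L} - {k}" using iL ik by blast
          show "j \<in> {1..L} - {k}" using jL jk by blast
        qed (rule eqf)
        then have "i \<in> N k" unfolding N_def by (rule rev_image_eqI) simp
        moreover have "k \<noteq> i" using ik by simp
        ultimately show False using indep i k by blast
      qed
    next
      assume "i = j \<and> j = k"
      then show "\<forall>d\<in>{0..<n}. a i d + b j d + c k d = 0" unfolding a_def b_def c_def by simp
    qed
  qed
  have finS: "finite S" using S finite_subset by blast
  have "real (card S) \<le> Gamma_q (card (UNIV::'a set)) ^ card {0..<n}"
    by (rule tricolor_Gamma[OF finS _ tri]) simp
  then have cSG: "real (card S) \<le> Gamma_q (card (UNIV::'a set)) ^ n" by simp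
  have G1: "1 \<le> Gamma_q (card (UNIV::'a set)) ^ n"
    using Gamma_pow_ge1[of "{0..<n}" "card (UNIV::'a set)"] card_field_ge2[where 'a='a] by simp
  have "real L \<le> real (2 * (t - 1) + 1) * real (card S)" 
  proof -
    have "L \<le> (2 * (t - 1) + 1) * card S" using cS by simp
    then show ?thesis by (simp only: of_nat_mult[symmetric] of_nat_le_iff)
  qed
  also have "real (2 * (t - 1) + 1) = 2 * real t - 1" using t0 by (simp add: of_nat_diff)
  finally have "real L \<le> (2 * real t - 1) * real (card S)" .
  also have "\<dots> \<le> (2 * real t - 1) * Gamma_q (card (UNIV::'a set)) ^ n"
    using cSG t0 by (intro mult_left_mono) auto
  finally have "4 * real t * Gamma_q (card (UNIV::'a set)) ^ n \<le> (2 * real t - 1) * Gamma_q (card (UNIV::'a set)) ^ n"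
    using Lbig by linarith
  then have "(2 * real t + 1) * Gamma_q (card (UNIV::'a set)) ^ n \<le> 0" by (simp add: algebra_simps)
  moreover have "0 < (2 * real t + 1) * Gamma_q (card (UNIV::'a set)) ^ n" using G1 by (intro mult_pos_pos) auto
  ultimately show False by linarith
qed

end
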